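(* Let $U=\{(x,f(x)):x\in\mathbb{F}_{q^n}\}$ and $W=\{(x,g(x)):x\in\mathbb{F}_{q^n}\}$, where $f,g$ are $q$-polynomials (so these are $n$-dimensional $\mathbb{F}_q$-subspaces of $\mathbb{F}_{q^n}^2$ with $\langle(0,1)\rangle\notin L_U,L_W$), and let $A,B$ be the Dickson matrices of $f,g$. Then $L_U=L_W$ if and only if $A$ and $B$ have equal corresponding principal minors, i.e. $\det A[\alpha|\alpha]=\det B[\alpha|\alpha]$ for all nonempty $\alpha\subseteq\mathbb{Z}_n$.
   Context: $q$ a prime power, $n\ge2$; $L_U=\{\langle u\rangle_{\mathbb{F}_{q^n}}:u\in U\setminus\{0\}\}\subseteq\mathrm{PG}(1,q^n)$. A $q$-polynomial is $f(x)=\sum_{j=0}^{n-1}a_jx^{q^j}\in\mathbb{F}_{q^n}[x]$; its Dickson matrix is the $n\times n$ matrix $A$ indexed by $\mathbb{Z}_n$ with $A[i|j]=a_{j-i}^{q^i}$ (indices mod $n$). $A[\alpha|\beta]$ is the submatrix with rows in $\alpha$ and columns in $\beta$. *)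

theory Defs
  imports "HOL-Computational_Algebra.Primes"
          "Jordan_Normal_Form.Determinant" "Jordan_Normal_Form.DL_Submatrix"
begin

definition qpoly :: "nat \<Rightarrow> nat \<Rightarrow> (nat \<Rightarrow> 'a::field) \<Rightarrow> 'a \<Rightarrow> 'a" where
  "qpoly q n a x = (\<Sum>j<n. a j * x ^ (q ^ j))"

definition dickson_matrix :: "nat \<Rightarrow> nat \<Rightarrow> (nat \<Rightarrow> 'a::field) \<Rightarrow> 'a mat" where
  "dickson_matrix q n a = mat n n (\<lambda>(i,j). (a ((j + n - i) mod n)) ^ (q ^ i))"

definition graph_space :: "nat \<Rightarrow> nat \<Rightarrow> (nat \<Rightarrow> 'a::field) \<Rightarrow> ('a \<times> 'a) set" where
  "graph_space q n a = {(x, qpoly q n a x) | x. True}"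

definition proj_point :: "'a::field \<times> 'a \<Rightarrow> ('a \<times> 'a) set" where
  "proj_point u = {(c * fst u, c * snd u) | c. c \<noteq> 0}"

definition linear_set :: "('a::field \<times> 'a) set \<Rightarrow> ('a \<times> 'a) set set" where
  "linear_set U = proj_point ` (U - {(0,0)})"

end

theory Submission
  imports Defs
begin


lemma sum_perm_conj:
  fixes M :: "'b \<Rightarrow> 'b \<Rightarrow> 'c::comm_ring_1"
  assumes bij: "bij_betw f A B" and ff: "\<And>x. x \<in> A \<Longrightarrow> f' (f x) = x" and fin: "finite A"
  shows "(\<Sum>p\<in>{p. p permutes B}. of_int (sign p) * (\<Prod>x\<in>B. M x (p x))) =
         (\<Sum>s\<in>{s. s permutes A}. of_int (sign s) * (\<Prod>a\<in>A. M (f a) (f (s a))))"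
proof -
  define \<Phi> where "\<Phi> = (\<lambda>s. \<lambda>x. if x \<in> B then f (s (f' x)) else x)"
  have fB: "\<And>x. x \<in> A \<Longrightarrow> f x \<in> B" using bij by (auto simp: bij_betw_def)
  have f'A: "\<And>x. x \<in> B \<Longrightarrow> f' x \<in> A" using bij ff by (auto simp: bij_betw_def)
  have f'f: "\<And>x. x \<in> B \<Longrightarrow> f (f' x) = x" using bij ff by (auto simp: bij_betw_def)
  have bij': "bij_betw f' B A" using bij ff by (auto simp: bij_betw_def inj_on_def image_image)
  have finB: "finite B" using bij fin bij_betw_finite by blast
  have loc: "permutes_bij_finite s A B f f'" if "s permutes A" for s
    using that bij ff fin by unfold_locales auto
  have b: "bij_betw \<Phi> {s. s permutes A} {p. p permutes B}"
  proof (rule bij_betw_imageI)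
    show "inj_on \<Phi> {s. s permutes A}"
    proof (rule inj_onI)
      fix s t assume s: "s \<in> {s. s permutes A}" and t: "t \<in> {s. s permutes A}" and e: "\<Phi> s = \<Phi> t"
      show "s = t"
      proof
        fix a show "s a = t a"
        proof (cases "a \<in> A")
          case True
          have "\<Phi> s (f a) = \<Phi> t (f a)" using e by simp
          hence "f (s a) = f (t a)" using True fB ff by (simp add: \<Phi>_def)
          moreover have "s a \<in> A" "t a \<in> A" using s t True permutes_in_image by fastforce+
          ultimately show ?thesis using bij by (auto simp: bij_betw_def inj_on_def)
        next
          case False thus ?thesis using s t by (simp add: permutes_not_in)
        qed
      qed
    qed
    show "\<Phi> ` {s. s permutes A} = {p. p permutes B}"
    proof
      show "\<Phi> ` {s. s permutes A} \<subseteq> {p. p permutes B}"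
        using permutes_bij.permutes_p' loc permutes_bij_finite.axioms(1) unfolding \<Phi>_def by fastforce
      show "{p. p permutes B} \<subseteq> \<Phi> ` {s. s permutes A}"
      proof
        fix p assume p: "p \<in> {p. p permutes B}"
        define s where "s = (\<lambda>a. if a \<in> A then f' (p (f a)) else a)"
        have "permutes_bij p B A f' f" using p bij' f'f by unfold_locales auto
        hence sp: "s permutes A" using permutes_bij.permutes_p' s_def by fastforce
        have "\<Phi> s = p"
        proof
          fix x show "\<Phi> s x = p x"
          proof (cases "x \<in> B")
            case True
            hence "p x \<in> B" using p permutes_in_image by fastforce
            thus ?thesis using True f'A f'f by (simp add: \<Phi>_def s_def)
          next
            case False thus ?thesis using p by (simp add: \<Phi>_def permutes_not_in)
          qed
        qed
        thus "p \<in> \<Phi> ` {s. s permutes A}" using sp by blast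
      qed
    qed
  qed
  have "(\<Sum>p\<in>{p. p permutes B}. of_int (sign p) * (\<Prod>x\<in>B. M x (p x))) =
        (\<Sum>s\<in>{s. s permutes A}. of_int (sign (\<Phi> s)) * (\<Prod>x\<in>B. M x (\<Phi> s x)))"
    using sum.reindex_bij_betw[OF b, of "\<lambda>p. of_int (sign p) * (\<Prod>x\<in>B. M x (p x))"] by simp
  also have "\<dots> = (\<Sum>s\<in>{s. s permutes A}. of_int (sign s) * (\<Prod>a\<in>A. M (f a) (f (s a))))"
  proof (rule sum.cong[OF refl])
    fix s assume s: "s \<in> {s. s permutes A}"
    have "sign (\<Phi> s) = sign s" using permutes_bij_finite.sign_p' loc s unfolding \<Phi>_def by fastforce
    moreover have "(\<Prod>x\<in>B. M x (\<Phi> s x)) = (\<Prod>a\<in>A. M (f a) (\<Phi> s (f a)))"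
      using prod.reindex_bij_betw[OF bij, of "\<lambda>x. M x (\<Phi> s x)"] by simp
    moreover have "(\<Prod>a\<in>A. M (f a) (\<Phi> s (f a))) = (\<Prod>a\<in>A. M (f a) (f (s a)))"
      by (rule prod.cong) (auto simp: \<Phi>_def fB ff)
    ultimately show "of_int (sign (\<Phi> s)) * (\<Prod>x\<in>B. M x (\<Phi> s x)) = of_int (sign s) * (\<Prod>a\<in>A. M (f a) (f (s a)))"
      by simp
  qed
  finally show ?thesis .
qed


lemma bij_pick:
  assumes "finite \<beta>"
  shows "bij_betw (pick \<beta>) {0..<card \<beta>} \<beta>"
proof (rule bij_betw_imageI)
  show "inj_on (pick \<beta>) {0..<card \<beta>}"
  proof (rule inj_onI)
    fix x y assume x: "x \<in> {0..<card \<beta>}" and y: "y \<in> {0..<card \<beta>}" and e: "pick \<beta> x = pick \<beta> y"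
    show "x = y"
    proof (rule ccontr)
      assume "x \<noteq> y"
      hence "x < y \<or> y < x" by arith
      thus False
      proof
        assume "x < y" thus False using pick_mono[of y \<beta> x] y e by simp
      next
        assume "y < x" thus False using pick_mono[of x \<beta> y] x e by simp
      qed
    qed
  qed
  show "pick \<beta> ` {0..<card \<beta>} = \<beta>"
  proof
    show "pick \<beta> ` {0..<card \<beta>} \<subseteq> \<beta>"
    proof
      fix x assume "x \<in> pick \<beta> ` {0..<card \<beta>}"
      then obtain t where "t < card \<beta>" "x = pick \<beta> t" by auto
      thus "x \<in> \<beta>" using pick_in_set[of t \<beta>] by simp
    qed
    show "\<beta> \<subseteq> pick \<beta> ` {0..<card \<beta>}"
    proof
      fix x assume x: "x \<in> \<beta>"
      have "{a\<in>\<beta>. a < x} \<subset> \<beta>" using x by auto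
      hence "card {a\<in>\<beta>. a < x} < card \<beta>" using assms psubset_card_mono by blast
      thus "x \<in> pick \<beta> ` {0..<card \<beta>}" using pick_card_in_set[OF x] by force
    qed
  qed
qed


lemma det_submatrix_perm:
  fixes A :: "'c::comm_ring_1 mat"
  assumes A: "A \<in> carrier_mat n n" and sub: "\<beta> \<subseteq> {0..<n}"
  shows "det (submatrix A \<beta> \<beta>) = (\<Sum>p\<in>{p. p permutes \<beta>}. of_int (sign p) * (\<Prod>x\<in>\<beta>. A $$ (x, p x)))"
proof -
  have fin: "finite \<beta>" using sub finite_subset by blast
  have set: "{i. i < dim_row A \<and> i \<in> \<beta>} = \<beta>" "{i. i < dim_col A \<and> i \<in> \<beta>} = \<beta>" using A sub by auto
  let ?k = "card \<beta>"
  have car: "submatrix A \<beta> \<beta> \<in> carrier_mat ?k ?k" by (rule carrier_matI) (simp_all only: dim_submatrix set)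
  have "det (submatrix A \<beta> \<beta>) = (\<Sum>s\<in>{s. s permutes {0..<?k}}. of_int (sign s) * (\<Prod>t=0..<?k. submatrix A \<beta> \<beta> $$ (t, s t)))"
    by (rule det_def'[OF car])
  also have "\<dots> = (\<Sum>s\<in>{s. s permutes {0..<?k}}. of_int (sign s) * (\<Prod>t\<in>{0..<?k}. A $$ (pick \<beta> t, pick \<beta> (s t))))"
  proof (rule sum.cong[OF refl])
    fix s assume s: "s \<in> {s. s permutes {0..<?k}}"
    have "(\<Prod>t=0..<?k. submatrix A \<beta> \<beta> $$ (t, s t)) = (\<Prod>t\<in>{0..<?k}. A $$ (pick \<beta> t, pick \<beta> (s t)))"
    proof (rule prod.cong[OF refl])
      fix t assume t: "t \<in> {0..<?k}"
      hence "s t < ?k" using s permutes_in_image by fastforce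
      thus "submatrix A \<beta> \<beta> $$ (t, s t) = A $$ (pick \<beta> t, pick \<beta> (s t))"
        using t set submatrix_index[of t A \<beta> "s t" \<beta>] by simp
    qed
    thus "of_int (sign s) * (\<Prod>t=0..<?k. submatrix A \<beta> \<beta> $$ (t, s t)) = of_int (sign s) * (\<Prod>t\<in>{0..<?k}. A $$ (pick \<beta> t, pick \<beta> (s t)))" by simp
  qed
  also have "\<dots> = (\<Sum>p\<in>{p. p permutes \<beta>}. of_int (sign p) * (\<Prod>x\<in>\<beta>. A $$ (x, p x)))"
  proof (rule sum_perm_conj[symmetric, OF bij_pick[OF fin], of "\<lambda>x. card {a\<in>\<beta>. a < x}"])
    fix x assume "x \<in> {0..<card \<beta>}"
    thus "card {a \<in> \<beta>. a < pick \<beta> x} = x" using card_pick[of x \<beta>] by simp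
  qed simp
  finally show ?thesis .
qed

lemma permutes_fix_iff:
  assumes "\<beta> \<subseteq> I"
  shows "(p permutes I \<and> (\<forall>i\<in>I-\<beta>. p i = i)) \<longleftrightarrow> p permutes \<beta>"
proof
  assume "p permutes \<beta>" thus "p permutes I \<and> (\<forall>i\<in>I-\<beta>. p i = i)"
    using assms permutes_subset permutes_not_in by fastforce
next
  assume "p permutes I \<and> (\<forall>i\<in>I-\<beta>. p i = i)"
  thus "p permutes \<beta>" unfolding permutes_def by blast
qed


lemma det_add_diag:
  fixes A :: "'c::comm_ring_1 mat"
  assumes A: "A \<in> carrier_mat n n"
  shows "det (mat n n (\<lambda>(i,j). A $$ (i,j) + (if i = j then d i else 0))) =
    (\<Sum>\<beta>\<in>Pow {0..<n}. det (submatrix A \<beta> \<beta>) * (\<Prod>i\<in>{0..<n}-\<beta>. d i))"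
proof -
  let ?I = "{0..<n}"
  let ?D = "\<lambda>p i. if p i = i then d i else 0"
  have car: "mat n n (\<lambda>(i,j). A $$ (i,j) + (if i = j then d i else 0)) \<in> carrier_mat n n" by simp
  have "det (mat n n (\<lambda>(i,j). A $$ (i,j) + (if i = j then d i else 0))) =
     (\<Sum>p\<in>{p. p permutes ?I}. of_int (sign p) * (\<Prod>i\<in>?I. A $$ (i, p i) + ?D p i))"
  proof (subst det_def'[OF car], rule sum.cong[OF refl])
    fix p assume p: "p \<in> {p. p permutes ?I}"
    have "(\<Prod>i = 0..<n. mat n n (\<lambda>(i,j). A $$ (i,j) + (if i = j then d i else 0)) $$ (i, p i)) =
          (\<Prod>i\<in>?I. A $$ (i, p i) + ?D p i)"
    proof (rule prod.cong[OF refl])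
      fix i assume i: "i \<in> ?I"
      hence "p i < n" using p permutes_in_image by fastforce
      thus "mat n n (\<lambda>(i,j). A $$ (i,j) + (if i = j then d i else 0)) $$ (i, p i) = A $$ (i, p i) + ?D p i"
        using i by auto
    qed
    thus "of_int (sign p) * (\<Prod>i = 0..<n. mat n n (\<lambda>(i,j). A $$ (i,j) + (if i = j then d i else 0)) $$ (i, p i)) =
          of_int (sign p) * (\<Prod>i\<in>?I. A $$ (i, p i) + ?D p i)" by simp
  qed
  also have "\<dots> = (\<Sum>p\<in>{p. p permutes ?I}. \<Sum>\<beta>\<in>Pow ?I. of_int (sign p) * ((\<Prod>i\<in>\<beta>. A $$ (i, p i)) * (\<Prod>i\<in>?I-\<beta>. ?D p i)))"
    by (simp add: prod_add sum_distrib_left)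
  also have "\<dots> = (\<Sum>\<beta>\<in>Pow ?I. \<Sum>p\<in>{p. p permutes ?I}. of_int (sign p) * ((\<Prod>i\<in>\<beta>. A $$ (i, p i)) * (\<Prod>i\<in>?I-\<beta>. ?D p i)))"
    by (rule sum.swap)
  also have "\<dots> = (\<Sum>\<beta>\<in>Pow ?I. det (submatrix A \<beta> \<beta>) * (\<Prod>i\<in>?I-\<beta>. d i))"
  proof (rule sum.cong[OF refl])
    fix \<beta> assume b: "\<beta> \<in> Pow ?I"
    have "(\<Sum>p\<in>{p. p permutes ?I}. of_int (sign p) * ((\<Prod>i\<in>\<beta>. A $$ (i, p i)) * (\<Prod>i\<in>?I-\<beta>. ?D p i))) =
          (\<Sum>p\<in>{p. p permutes \<beta>}. of_int (sign p) * ((\<Prod>i\<in>\<beta>. A $$ (i, p i)) * (\<Prod>i\<in>?I-\<beta>. d i)))"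
    proof (rule sum.mono_neutral_cong_right)
      show "finite {p. p permutes ?I}" by (rule finite_permutations) simp
      show "{p. p permutes \<beta>} \<subseteq> {p. p permutes ?I}" using b permutes_subset by blast
    next
      show "\<forall>p\<in>{p. p permutes ?I} - {p. p permutes \<beta>}. of_int (sign p) * ((\<Prod>i\<in>\<beta>. A $$ (i, p i)) * (\<Prod>i\<in>?I-\<beta>. ?D p i)) = 0"
      proof
        fix p assume p: "p \<in> {p. p permutes ?I} - {p. p permutes \<beta>}"
        then obtain i where i: "i \<in> ?I - \<beta>" "p i \<noteq> i" using permutes_fix_iff[of \<beta> ?I p] b by blast
        have "(\<Prod>i\<in>?I-\<beta>. ?D p i) = 0" using i by (intro prod_zero) auto
        thus "of_int (sign p) * ((\<Prod>i\<in>\<beta>. A $$ (i, p i)) * (\<Prod>i\<in>?I-\<beta>. ?D p i)) = 0" by simp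
      qed
    next
      fix p assume p: "p \<in> {p. p permutes \<beta>}"
      hence "\<forall>i\<in>?I-\<beta>. p i = i" using permutes_fix_iff[of \<beta> ?I p] b by blast
      hence "(\<Prod>i\<in>?I-\<beta>. ?D p i) = (\<Prod>i\<in>?I-\<beta>. d i)" by (intro prod.cong) auto
      thus "of_int (sign p) * ((\<Prod>i\<in>\<beta>. A $$ (i, p i)) * (\<Prod>i\<in>?I-\<beta>. ?D p i)) =
            of_int (sign p) * ((\<Prod>i\<in>\<beta>. A $$ (i, p i)) * (\<Prod>i\<in>?I-\<beta>. d i))" by simp
    qed
    also have "\<dots> = det (submatrix A \<beta> \<beta>) * (\<Prod>i\<in>?I-\<beta>. d i)"
      using det_submatrix_perm[OF A, of \<beta>] b by (simp add: sum_distrib_right mult.assoc)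
    finally show "(\<Sum>p\<in>{p. p permutes ?I}. of_int (sign p) * ((\<Prod>i\<in>\<beta>. A $$ (i, p i)) * (\<Prod>i\<in>?I-\<beta>. ?D p i))) =
          det (submatrix A \<beta> \<beta>) * (\<Prod>i\<in>?I-\<beta>. d i)" .
  qed
  finally show ?thesis .
qed


lemma field_fermat:
  fixes x :: "'a::{finite,field}"
  shows "x ^ card (UNIV :: 'a set) = x"
proof (cases "x = 0")
  case True thus ?thesis by (simp add: finite_UNIV_card_ge_0)
next
  case False
  let ?N = "UNIV - {0::'a}"
  have b: "bij_betw (\<lambda>y. x * y) ?N ?N"
    by (rule bij_betwI[of _ _ _ "\<lambda>y. y / x"]) (use False in auto)
  have "(\<Prod>y\<in>?N. x * y) = (\<Prod>y\<in>?N. y)" using prod.reindex_bij_betw[OF b, of "\<lambda>y. y"] by simp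
  moreover have "(\<Prod>y\<in>?N. x * y) = x ^ card ?N * (\<Prod>y\<in>?N. y)" by (simp add: prod.distrib)
  moreover have "(\<Prod>y\<in>?N. y) \<noteq> 0" by simp
  ultimately have "x ^ card ?N = 1" by simp
  moreover have "card ?N = card (UNIV::'a set) - 1" by (simp add: card_Diff_singleton)
  moreover have "card (UNIV::'a set) \<ge> 1" by (simp add: finite_UNIV_card_ge_0 Suc_leI)
  ultimately have "card (UNIV::'a set) = Suc (card ?N)" "x ^ card ?N = 1" by auto
  thus ?thesis by (simp only: power_Suc) simp
qed

locale ffq =
  fixes q n k :: nat and ty :: "'a::{finite,field} itself"
  assumes pc: "prime CHAR('a)"
    and qk: "q = CHAR('a) ^ k" and kpos: "k > 0" and npos: "n \<ge> 2"
    and card: "card (UNIV::'a set) = q ^ n"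
begin

lemma q_ge2: "q \<ge> 2"
proof -
  have "CHAR('a) \<ge> 2" using pc prime_ge_2_nat by blast
  hence "CHAR('a) ^ k \<ge> CHAR('a) ^ 1" using kpos by (intro power_increasing) auto
  thus ?thesis using qk \<open>CHAR('a) \<ge> 2\<close> by simp
qed

lemma qpow_char: "q ^ i = CHAR('a) ^ (k * i)"
  by (simp add: qk power_mult)

lemma frob_add: "(x + y :: 'a) ^ (q ^ i) = x ^ (q ^ i) + y ^ (q ^ i)"
  by (rule freshmans_dream'[OF pc qpow_char])

lemma frob_sum: "(sum f A :: 'a) ^ (q ^ i) = (\<Sum>j\<in>A. f j ^ (q ^ i))"
  by (rule freshmans_dream_sum'[OF pc qpow_char])

lemma frob_neg: "(- x :: 'a) ^ (q ^ i) = - (x ^ (q ^ i))"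
proof -
  have "q ^ i > 0" using q_ge2 by simp
  hence "(x + - x) ^ (q ^ i) = 0" by simp
  hence "x ^ (q ^ i) + (- x) ^ (q ^ i) = 0" by (simp only: frob_add)
  thus ?thesis by (simp add: eq_neg_iff_add_eq_0 add.commute)
qed

lemma frob_diff: "(x - y :: 'a) ^ (q ^ i) = x ^ (q ^ i) - y ^ (q ^ i)"
  using frob_add[of x "- y" i] frob_neg[of y i] by simp

lemma fermat_q: "(x::'a) ^ (q ^ n) = x"
  using field_fermat[of x] card by simp

lemma fermat_mul: "(x::'a) ^ (q ^ (a * n)) = x"
proof (induction a)
  case 0 thus ?case by simp
next
  case (Suc a)
  have "q ^ (Suc a * n) = q ^ (a * n) * q ^ n" by (simp add: power_add)
  hence "x ^ (q ^ (Suc a * n)) = (x ^ (q ^ (a * n))) ^ (q ^ n)"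
    by (simp only: power_mult)
  thus ?case using Suc fermat_q by simp
qed

lemma pow_mod: "(x::'a) ^ (q ^ j) = x ^ (q ^ (j mod n))"
proof -
  have "j = (j div n) * n + j mod n" by simp
  hence "x ^ (q ^ j) = (x ^ (q ^ ((j div n) * n))) ^ (q ^ (j mod n))"
    by (metis power_add power_mult)
  thus ?thesis using fermat_mul by simp
qed

lemma frob_q_pow: "((x::'a) ^ (q ^ i)) ^ (q ^ j) = x ^ (q ^ (i + j))"
  by (simp add: power_add power_mult)

end


context ffq begin

lemma mod_inv1: "u < n \<Longrightarrow> i < n \<Longrightarrow> ((u + i) mod n + n - i) mod n = u"
proof (cases "u + i < n")
  case True
  assume "u < n" "i < n"
  hence "(u + i) mod n + n - i = u + n" using True by simp
  thus ?thesis using \<open>u < n\<close> by simp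
next
  case False
  assume "u < n" "i < n"
  hence "(u + i) mod n = u + i - n" using False by (simp add: le_mod_geq)
  hence "(u + i) mod n + n - i = u" using False by simp
  thus ?thesis using \<open>u < n\<close> by simp
qed

lemma mod_inv2: "j < n \<Longrightarrow> i < n \<Longrightarrow> ((j + n - i) mod n + i) mod n = j"
proof -
  assume "j < n" "i < n"
  have "((j + n - i) mod n + i) mod n = (j + n - i + i) mod n" by (simp add: mod_add_left_eq)
  also have "j + n - i + i = j + n" using \<open>i < n\<close> by simp
  finally show ?thesis using \<open>j < n\<close> by simp
qed

lemma dick_entry: "i < n \<Longrightarrow> j < n \<Longrightarrow> dickson_matrix q n c $$ (i,j) = c ((j + n - i) mod n) ^ (q ^ i)"
  unfolding dickson_matrix_def by simp

lemma dick_carrier: "dickson_matrix q n c \<in> carrier_mat n n"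
  unfolding dickson_matrix_def by simp

lemma row_eq:
  fixes c :: "nat \<Rightarrow> 'a"
  assumes i: "i < n"
  shows "(\<Sum>j<n. dickson_matrix q n c $$ (i,j) * x ^ (q ^ j)) = (qpoly q n c x) ^ (q ^ i)"
proof -
  define g where "g = (\<lambda>k. (k + i) mod n)"
  have b: "bij_betw g {..<n} {..<n}"
    by (rule bij_betwI[of _ _ _ "\<lambda>j. (j + n - i) mod n"]) (use i npos mod_inv1 mod_inv2 in \<open>auto simp: g_def\<close>)
  have "(qpoly q n c x) ^ (q ^ i) = (\<Sum>k<n. c k ^ (q ^ i) * x ^ (q ^ (k + i)))"
    unfolding qpoly_def by (simp add: frob_sum power_mult_distrib frob_q_pow)
  also have "\<dots> = (\<Sum>k<n. c k ^ (q ^ i) * x ^ (q ^ (g k)))"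
    by (rule sum.cong[OF refl]) (metis g_def pow_mod)
  also have "\<dots> = (\<Sum>k<n. c ((g k + n - i) mod n) ^ (q ^ i) * x ^ (q ^ (g k)))"
    by (rule sum.cong[OF refl]) (use i mod_inv1 in \<open>simp add: g_def\<close>)
  also have "\<dots> = (\<Sum>j<n. c ((j + n - i) mod n) ^ (q ^ i) * x ^ (q ^ j))"
    using sum.reindex_bij_betw[OF b, of "\<lambda>j. c ((j + n - i) mod n) ^ (q ^ i) * x ^ (q ^ j)"] by simp
  also have "\<dots> = (\<Sum>j<n. dickson_matrix q n c $$ (i,j) * x ^ (q ^ j))"
    by (rule sum.cong[OF refl]) (simp add: i dick_entry)
  finally show ?thesis by simp
qed

lemma qpoly_diff:
  fixes c :: "nat \<Rightarrow> 'a"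
  shows "qpoly q n c (x - y) = qpoly q n c x - qpoly q n c y"
  unfolding qpoly_def by (simp add: frob_diff right_diff_distrib sum_subtractf)

lemma qpoly_zero:
  fixes c :: "nat \<Rightarrow> 'a"
  shows "qpoly q n c 0 = 0"
  using qpoly_diff[of c 0 0] by simp

lemma det_zero_root:
  fixes c :: "nat \<Rightarrow> 'a"
  shows "det (dickson_matrix q n c) = 0 \<longleftrightarrow> (\<exists>x. x \<noteq> 0 \<and> qpoly q n c x = 0)"
proof
  assume "\<exists>x. x \<noteq> 0 \<and> qpoly q n c x = 0"
  then obtain x where x: "x \<noteq> 0" "qpoly q n c x = 0" by blast
  define v where "v = vec n (\<lambda>j. x ^ (q ^ j))"
  have vc: "v \<in> carrier_vec n" by (simp add: v_def)
  have "v $ 0 = x" using npos by (simp add: v_def)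
  hence vnz: "v \<noteq> 0\<^sub>v n" using x npos by auto
  have "dickson_matrix q n c *\<^sub>v v = 0\<^sub>v n"
  proof (rule eq_vecI)
    fix i assume "i < dim_vec (0\<^sub>v n :: 'a vec)"
    hence i: "i < n" by simp
    have "(dickson_matrix q n c *\<^sub>v v) $ i = (\<Sum>j<n. dickson_matrix q n c $$ (i,j) * x ^ (q ^ j))"
      using i dick_carrier[of c] by (simp add: mult_mat_vec_def scalar_prod_def v_def atLeast0LessThan)
    also have "\<dots> = 0" using row_eq[OF i] x(2) q_ge2 by (simp add: power_0_left)
    finally show "(dickson_matrix q n c *\<^sub>v v) $ i = 0\<^sub>v n $ i" using i by simp
  qed (use dick_carrier[of c] in simp)
  thus "det (dickson_matrix q n c) = 0"
    using det_0_iff_vec_prod_zero_field[OF dick_carrier[of c]] vc vnz by blast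
next
  assume d: "det (dickson_matrix q n c) = 0"
  show "\<exists>x. x \<noteq> 0 \<and> qpoly q n c x = 0"
  proof (rule ccontr)
    assume nr: "\<not> (\<exists>x. x \<noteq> 0 \<and> qpoly q n c x = 0)"
    let ?D = "dickson_matrix q n c"
    have tc: "transpose_mat ?D \<in> carrier_mat n n" using dick_carrier[of c] by simp
    have "det (transpose_mat ?D) = 0" using d det_transpose[OF dick_carrier[of c]] by simp
    then obtain v where vc: "v \<in> carrier_vec n" and vnz: "v \<noteq> 0\<^sub>v n" and vk: "transpose_mat ?D *\<^sub>v v = 0\<^sub>v n"
      using det_0_iff_vec_prod_zero_field[OF tc] by blast
    have col: "(\<Sum>i<n. ?D $$ (i,j) * v $ i) = 0" if j: "j < n" for j
    proof -
      have "(transpose_mat ?D *\<^sub>v v) $ j = 0" using vk j by simp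
      thus ?thesis using j vc dick_carrier[of c]
        by (simp add: mult_mat_vec_def scalar_prod_def atLeast0LessThan mult.commute)
    qed
    have inj: "inj (qpoly q n c)"
    proof (rule injI)
      fix x y assume "qpoly q n c x = qpoly q n c y"
      hence "qpoly q n c (x - y) = 0" by (simp add: qpoly_diff)
      hence "x - y = 0" using nr by blast
      thus "x = y" by simp
    qed
    have surj: "surj (qpoly q n c)" using finite_UNIV_inj_surj[OF finite_UNIV inj] .
    have R0: "(\<Sum>i<n. v $ i * y ^ (q ^ i)) = 0" for y
    proof -
      obtain x where y: "y = qpoly q n c x" using surj by (metis surjD)
      have "(\<Sum>i<n. v $ i * y ^ (q ^ i)) = (\<Sum>i<n. v $ i * (\<Sum>j<n. ?D $$ (i,j) * x ^ (q ^ j)))"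
        by (rule sum.cong[OF refl]) (simp add: row_eq y)
      also have "\<dots> = (\<Sum>i<n. \<Sum>j<n. v $ i * (?D $$ (i,j) * x ^ (q ^ j)))"
        by (simp only: sum_distrib_left)
      also have "\<dots> = (\<Sum>j<n. \<Sum>i<n. v $ i * (?D $$ (i,j) * x ^ (q ^ j)))"
        by (rule sum.swap)
      also have "\<dots> = (\<Sum>j<n. (\<Sum>i<n. ?D $$ (i,j) * v $ i) * x ^ (q ^ j))"
      proof (rule sum.cong[OF refl])
        fix j
        show "(\<Sum>i<n. v $ i * (?D $$ (i,j) * x ^ (q ^ j))) = (\<Sum>i<n. ?D $$ (i,j) * v $ i) * x ^ (q ^ j)"
          unfolding sum_distrib_right by (rule sum.cong[OF refl]) (simp only: mult_ac)
      qed
      also have "\<dots> = 0" using col by simp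
      finally show ?thesis .
    qed
    define Rp where "Rp = (\<Sum>i<n. monom (v $ i) (q ^ i))"
    have polyR: "poly Rp y = 0" for y using R0[of y] by (simp add: Rp_def poly_sum poly_monom)
    obtain i0 where i0: "i0 < n" "v $ i0 \<noteq> 0" using vnz vc by (metis eq_vecI carrier_vecD index_zero_vec)
    have qinj: "q ^ i = q ^ i0 \<longleftrightarrow> i = i0" for i using q_ge2 by (simp add: power_inject_exp)
    have "coeff Rp (q ^ i0) = (\<Sum>i<n. if i = i0 then v $ i else 0)"
      by (simp add: Rp_def coeff_sum coeff_monom qinj)
    also have "\<dots> = v $ i0" using i0 by simp
    finally have "Rp \<noteq> 0" using i0 by auto
    have "degree Rp \<le> q ^ (n - 1)"
      unfolding Rp_def
    proof (rule degree_sum_le)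
      fix i assume "i \<in> {..<n}"
      hence "q ^ i \<le> q ^ (n - 1)" using q_ge2 by (intro power_increasing) auto
      thus "degree (monom (v $ i) (q ^ i)) \<le> q ^ (n - 1)" using degree_monom_le le_trans by blast
    qed simp
    moreover have "card {x. poly Rp x = 0} \<le> degree Rp" by (rule card_poly_roots_bound[OF \<open>Rp \<noteq> 0\<close>])
    moreover have "{x. poly Rp x = 0} = UNIV" using polyR by auto
    moreover have "q ^ (n - 1) < q ^ n" using q_ge2 npos by (intro power_strict_increasing) auto
    ultimately show False using card by simp
  qed
qed

end


lemma mod_shift_idx:
  assumes "i < (n::nat)" "j < n"
  shows "((j + 1) mod n + n - (i + 1) mod n) mod n = (j + n - i) mod n"
proof -
  have m: "a < 2 * n \<Longrightarrow> a mod n = (if a < n then a else a - n)" for a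
    by (simp add: mod_if le_mod_geq)
  show ?thesis
  proof (cases "i + 1 < n"; cases "j + 1 < n")
    assume "i + 1 < n" "j + 1 < n" thus ?thesis using assms by simp
  next
    assume a: "i + 1 < n" "\<not> j + 1 < n"
    hence "j = n - 1" using assms by simp
    thus ?thesis using a assms by (simp add: m)
  next
    assume a: "\<not> i + 1 < n" "j + 1 < n"
    hence "i = n - 1" using assms by simp
    thus ?thesis using a assms by (simp add: m)
  next
    assume a: "\<not> i + 1 < n" "\<not> j + 1 < n"
    hence "i = n - 1" "j = n - 1" using assms by simp_all
    thus ?thesis using a assms by simp
  qed
qed

context ffq begin

lemma qpoly_shift:
  fixes c :: "nat \<Rightarrow> 'a"
  shows "qpoly q n (c(0 := c 0 - l)) x = qpoly q n c x - l * x"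
proof -
  have "qpoly q n (c(0 := c 0 - l)) x = (\<Sum>j<n. c j * x ^ (q ^ j) - (if j = 0 then l * x else 0))"
    unfolding qpoly_def by (rule sum.cong[OF refl]) (auto simp: algebra_simps)
  also have "\<dots> = qpoly q n c x - l * x"
    using npos by (simp add: sum_subtractf qpoly_def)
  finally show ?thesis .
qed

lemma dickson_shift:
  fixes c :: "nat \<Rightarrow> 'a"
  shows "dickson_matrix q n (c(0 := c 0 - l)) =
    mat n n (\<lambda>(i,j). dickson_matrix q n c $$ (i,j) + (if i = j then - (l ^ (q ^ i)) else 0))"
proof (rule eq_matI)
  fix i j assume "i < dim_row (mat n n (\<lambda>(i,j). dickson_matrix q n c $$ (i,j) + (if i = j then - (l ^ (q ^ i)) else 0)))"
    "j < dim_col (mat n n (\<lambda>(i,j). dickson_matrix q n c $$ (i,j) + (if i = j then - (l ^ (q ^ i)) else 0)))"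
  hence ij: "i < n" "j < n" by auto
  have z: "(j + n - i) mod n = 0 \<longleftrightarrow> i = j"
  proof
    assume "(j + n - i) mod n = 0"
    show "i = j"
    proof (rule ccontr)
      assume "i \<noteq> j"
      hence "i < j \<or> j < i" by arith
      thus False
      proof
        assume "i < j"
        hence "(j + n - i) mod n = j - i" using ij by (simp add: le_mod_geq)
        thus False using \<open>i < j\<close> \<open>(j + n - i) mod n = 0\<close> by simp
      next
        assume "j < i"
        hence "(j + n - i) mod n = j + n - i" using ij by simp
        thus False using \<open>j < i\<close> ij \<open>(j + n - i) mod n = 0\<close> by simp
      qed
    qed
  qed simp
  show "dickson_matrix q n (c(0 := c 0 - l)) $$ (i,j) =
    mat n n (\<lambda>(i,j). dickson_matrix q n c $$ (i,j) + (if i = j then - (l ^ (q ^ i)) else 0)) $$ (i,j)"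
    using ij z by (auto simp: dick_entry frob_diff)
qed (auto simp: dickson_matrix_def)

lemma P_expand:
  fixes c :: "nat \<Rightarrow> 'a"
  shows "det (dickson_matrix q n (c(0 := c 0 - l))) =
    (\<Sum>\<beta>\<in>Pow {0..<n}. det (submatrix (dickson_matrix q n c) \<beta> \<beta>) * (\<Prod>i\<in>{0..<n}-\<beta>. - (l ^ (q ^ i))))"
  unfolding dickson_shift by (rule det_add_diag[OF dick_carrier])

lemma sign_frob: "(of_int (sign p) :: 'a) ^ q = of_int (sign p)"
proof -
  have "(- 1 :: 'a) ^ (q ^ 1) = - (1 ^ (q ^ 1))" by (rule frob_neg)
  hence "(- 1 :: 'a) ^ q = - 1" by simp
  thus ?thesis by (cases "sign p = 1") (auto simp: sign_def)
qed

lemma det_frob: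
  fixes c :: "nat \<Rightarrow> 'a"
  shows "det (dickson_matrix q n c) ^ q = det (dickson_matrix q n c)"
proof -
  let ?D = "dickson_matrix q n c"
  let ?I = "{0..<n}"
  define s where "s = (\<lambda>i::nat. (i + 1) mod n)"
  have one: "1 < n" using npos by simp
  have b: "bij_betw s ?I ?I"
    by (rule bij_betwI[of _ _ _ "\<lambda>j. (j + n - 1) mod n"])
       (use npos mod_inv1[OF _ one] mod_inv2[OF _ one] in \<open>auto simp: s_def\<close>)
  have ent: "?D $$ (i,j) ^ q = ?D $$ (s i, s j)" if "i < n" "j < n" for i j
  proof -
    have "s i < n" "s j < n" using npos by (auto simp: s_def)
    hence "?D $$ (s i, s j) = c ((j + n - i) mod n) ^ (q ^ s i)"
      using that mod_shift_idx[OF that] by (simp add: dick_entry s_def)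
    also have "\<dots> = c ((j + n - i) mod n) ^ (q ^ (i + 1))"
      unfolding s_def by (rule pow_mod[symmetric])
    also have "\<dots> = ?D $$ (i,j) ^ q"
      using that by (simp add: dick_entry power_mult[symmetric] mult.commute)
    finally show ?thesis by simp
  qed
  have "det ?D ^ q = det ?D ^ (q ^ 1)" by simp
  also have "\<dots> = (\<Sum>p\<in>{p. p permutes ?I}. (of_int (sign p) * (\<Prod>i=0..<n. ?D $$ (i, p i))) ^ (q ^ 1))"
    unfolding det_def'[OF dick_carrier] by (rule frob_sum)
  also have "\<dots> = (\<Sum>p\<in>{p. p permutes ?I}. of_int (sign p) * (\<Prod>i\<in>?I. ?D $$ (s i, s (p i))))"
  proof (rule sum.cong[OF refl])
    fix p assume p: "p \<in> {p. p permutes ?I}"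
    have "(\<Prod>i=0..<n. ?D $$ (i, p i)) ^ q = (\<Prod>i\<in>?I. ?D $$ (s i, s (p i)))"
      unfolding prod_power_distrib
    proof (rule prod.cong[OF refl])
      fix i assume i: "i \<in> ?I"
      hence "p i \<in> ?I" using p permutes_in_image by fastforce
      thus "?D $$ (i, p i) ^ q = ?D $$ (s i, s (p i))" using i ent by simp
    qed
    thus "(of_int (sign p) * (\<Prod>i=0..<n. ?D $$ (i, p i))) ^ (q ^ 1) = of_int (sign p) * (\<Prod>i\<in>?I. ?D $$ (s i, s (p i)))"
      by (simp add: power_mult_distrib sign_frob)
  qed
  also have "\<dots> = (\<Sum>p\<in>{p. p permutes ?I}. of_int (sign p) * (\<Prod>x\<in>?I. ?D $$ (x, p x)))"
    by (rule sum_perm_conj[symmetric, OF b, of "\<lambda>j. (j + n - 1) mod n"])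
       (use npos mod_inv1[OF _ one] in \<open>auto simp: s_def\<close>)
  also have "\<dots> = det ?D" unfolding det_def'[OF dick_carrier] by simp
  finally show ?thesis .
qed

end


lemma geom_lt: "(q::nat) \<ge> 2 \<Longrightarrow> (\<Sum>i<m. q ^ i) < q ^ m"
proof (induction m)
  case 0 thus ?case by simp
next
  case (Suc m)
  have "(\<Sum>i<Suc m. q ^ i) = (\<Sum>i<m. q ^ i) + q ^ m" by simp
  also have "\<dots> < q ^ m + q ^ m" using Suc by simp
  also have "\<dots> \<le> q * q ^ m" using Suc.prems by (simp add: mult_2[symmetric])
  finally show ?case by simp
qed

lemma geom_eq: "(q::nat) \<ge> 1 \<Longrightarrow> (q - 1) * (\<Sum>i<m. q ^ i) + 1 = q ^ m"
proof (induction m)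
  case 0 thus ?case by simp
next
  case (Suc m)
  obtain r where r: "q = Suc r" using Suc.prems by (cases q) auto
  have "(q - 1) * (\<Sum>i<Suc m. q ^ i) + 1 = ((q - 1) * (\<Sum>i<m. q ^ i) + 1) + (q - 1) * q ^ m"
    by (simp add: algebra_simps)
  also have "\<dots> = q ^ m + r * q ^ m" using Suc r by simp
  also have "\<dots> = q ^ Suc m" using r by simp
  finally show ?case .
qed

lemma digits_inj:
  assumes "(q::nat) \<ge> 2"
  shows "S \<subseteq> {..<m} \<Longrightarrow> T \<subseteq> {..<m} \<Longrightarrow> (\<Sum>i\<in>S. q ^ i) = (\<Sum>i\<in>T. q ^ i) \<Longrightarrow> S = T"
proof (induction m arbitrary: S T)
  case 0 thus ?case by simp
next
  case (Suc m)
  have finS: "finite S" "finite T" using Suc.prems finite_subset by blast+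
  have low: "(\<Sum>i\<in>X. q ^ i) < q ^ m" if "X \<subseteq> {..<m}" for X
  proof -
    have "(\<Sum>i\<in>X. q ^ i) \<le> (\<Sum>i<m. q ^ i)" using that by (intro sum_mono2) auto
    also have "\<dots> < q ^ m" using geom_lt assms by blast
    finally show ?thesis .
  qed
  have high: "q ^ m \<le> (\<Sum>i\<in>X. q ^ i)" if "m \<in> X" "finite X" for X
    using that by (intro member_le_sum) auto
  have S': "S - {m} \<subseteq> {..<m}" "T - {m} \<subseteq> {..<m}" using Suc.prems by auto
  show ?case
  proof (cases "m \<in> S"; cases "m \<in> T")
    assume a: "m \<in> S" "m \<in> T"
    have "(\<Sum>i\<in>S - {m}. q ^ i) = (\<Sum>i\<in>T - {m}. q ^ i)"
      using Suc.prems(3) a finS by (simp add: sum_diff1_nat)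
    hence "S - {m} = T - {m}" using Suc.IH S' by blast
    thus ?thesis using a by blast
  next
    assume a: "m \<in> S" "m \<notin> T"
    hence "T \<subseteq> {..<m}" using Suc.prems by (auto simp: less_Suc_eq)
    hence "(\<Sum>i\<in>T. q ^ i) < q ^ m" by (rule low)
    moreover have "q ^ m \<le> (\<Sum>i\<in>S. q ^ i)" using high a finS by blast
    ultimately show ?thesis using Suc.prems(3) by simp
  next
    assume a: "m \<notin> S" "m \<in> T"
    hence "S \<subseteq> {..<m}" using Suc.prems by (auto simp: less_Suc_eq)
    hence "(\<Sum>i\<in>S. q ^ i) < q ^ m" by (rule low)
    moreover have "q ^ m \<le> (\<Sum>i\<in>T. q ^ i)" using high a finS by blast
    ultimately show ?thesis using Suc.prems(3) by simp
  next
    assume a: "m \<notin> S" "m \<notin> T"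
    hence "S \<subseteq> {..<m}" "T \<subseteq> {..<m}" using Suc.prems by (auto simp: less_Suc_eq)
    thus ?thesis using Suc.IH Suc.prems(3) by blast
  qed
qed

lemma pow_eq_imp_eq:
  fixes P Q :: "'a::field poly"
  assumes e: "P ^ m = Q ^ m" and m: "m > 0" and d: "degree P = degree Q"
    and l: "lead_coeff P = lead_coeff Q" and l0: "lead_coeff P \<noteq> 0" and c: "(of_nat m :: 'a) \<noteq> 0"
  shows "P = Q"
proof -
  obtain m' where m': "m = Suc m'" using m by (cases m) auto
  have P0: "P \<noteq> 0" using l0 by auto
  have Q0: "Q \<noteq> 0" using l0 l by auto
  define S where "S = (\<Sum>p<Suc m'. P ^ p * Q ^ (m' - p))"
  have "P ^ m - Q ^ m = (P - Q) * S" unfolding S_def m' by (rule diff_power_eq_sum)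
  hence z: "(P - Q) * S = 0" using e by simp
  have t: "coeff (P ^ p * Q ^ (m' - p)) (m' * degree P) = lead_coeff P ^ m'" if "p < Suc m'" for p
  proof -
    have "degree (P ^ p * Q ^ (m' - p)) = p * degree P + (m' - p) * degree P"
      using P0 Q0 d by (simp add: degree_mult_eq degree_power_eq)
    also have "\<dots> = m' * degree P" using that by (simp add: add_mult_distrib[symmetric])
    finally have dg: "degree (P ^ p * Q ^ (m' - p)) = m' * degree P" .
    have "lead_coeff (P ^ p * Q ^ (m' - p)) = lead_coeff P ^ p * lead_coeff P ^ (m' - p)"
      using l by (simp add: lead_coeff_mult lead_coeff_power)
    also have "\<dots> = lead_coeff P ^ m'" using that by (simp add: power_add[symmetric])
    finally show ?thesis using dg by simp
  qed
  have "coeff S (m' * degree P) = (\<Sum>p<Suc m'. lead_coeff P ^ m')"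
    unfolding S_def coeff_sum using t by simp
  also have "\<dots> = of_nat m * lead_coeff P ^ m'" using m' by simp
  finally have "coeff S (m' * degree P) \<noteq> 0" using c l0 by simp
  hence "S \<noteq> 0" by auto
  thus ?thesis using z by simp
qed


context ffq begin

definition ee :: "nat set \<Rightarrow> nat" where "ee \<beta> = (\<Sum>i\<in>{0..<n}-\<beta>. q ^ i)"
definition mm :: "(nat \<Rightarrow> 'a) \<Rightarrow> nat set \<Rightarrow> 'a" where
  "mm c \<beta> = det (submatrix (dickson_matrix q n c) \<beta> \<beta>) * (- 1) ^ card ({0..<n}-\<beta>)"
definition PP :: "(nat \<Rightarrow> 'a) \<Rightarrow> 'a poly" where
  "PP c = (\<Sum>\<beta>\<in>Pow {0..<n}. monom (mm c \<beta>) (ee \<beta>))"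

lemma poly_PP: "poly (PP c) l = det (dickson_matrix q n (c(0 := c 0 - l)))"
proof -
  have "(\<Prod>i\<in>{0..<n}-\<beta>. - (l ^ (q ^ i))) = (- 1) ^ card ({0..<n}-\<beta>) * l ^ ee \<beta>" for \<beta>
  proof -
    have "(\<Prod>i\<in>{0..<n}-\<beta>. - (l ^ (q ^ i))) = (\<Prod>i\<in>{0..<n}-\<beta>. (- 1) * (l ^ (q ^ i)))"
      by (rule prod.cong) simp_all
    also have "\<dots> = (- 1) ^ card ({0..<n}-\<beta>) * (\<Prod>i\<in>{0..<n}-\<beta>. l ^ (q ^ i))"
      by (simp only: prod.distrib prod_constant)
    also have "(\<Prod>i\<in>{0..<n}-\<beta>. l ^ (q ^ i)) = l ^ ee \<beta>" by (simp add: ee_def power_sum)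
    finally show ?thesis .
  qed
  thus ?thesis unfolding P_expand PP_def
    by (simp add: poly_sum poly_monom mm_def mult.assoc)
qed

lemma E_def': "ee {} = (\<Sum>i<n. q ^ i)"
  by (simp add: ee_def atLeast0LessThan)

lemma ee_le: "ee \<beta> \<le> ee {}"
  unfolding ee_def by (intro sum_mono2) auto

lemma ee_max: "\<beta> \<subseteq> {0..<n} \<Longrightarrow> ee \<beta> = ee {} \<Longrightarrow> \<beta> = {}"
proof (rule ccontr)
  assume s: "\<beta> \<subseteq> {0..<n}" and e: "ee \<beta> = ee {}" and ne: "\<beta> \<noteq> {}"
  then obtain b where b: "b \<in> \<beta>" by blast
  have "ee \<beta> \<le> (\<Sum>i\<in>{0..<n}-{b}. q ^ i)" unfolding ee_def using b by (intro sum_mono2) auto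
  also have "\<dots> < (\<Sum>i\<in>{0..<n}. q ^ i)"
  proof -
    have "b \<in> {0..<n}" using s b by blast
    hence "(\<Sum>i\<in>{0..<n}. q ^ i) = q ^ b + (\<Sum>i\<in>{0..<n}-{b}. q ^ i)" by (simp add: sum.remove)
    moreover have "q ^ b > 0" using q_ge2 by simp
    ultimately show ?thesis by simp
  qed
  finally show False using e by (simp add: ee_def)
qed

lemma ee_inj: "\<beta> \<subseteq> {0..<n} \<Longrightarrow> \<gamma> \<subseteq> {0..<n} \<Longrightarrow> ee \<beta> = ee \<gamma> \<Longrightarrow> \<beta> = \<gamma>"
proof -
  assume b: "\<beta> \<subseteq> {0..<n}" and g: "\<gamma> \<subseteq> {0..<n}" and e: "ee \<beta> = ee \<gamma>"
  have s1: "{0..<n} - \<beta> \<subseteq> {..<n}" "{0..<n} - \<gamma> \<subseteq> {..<n}" by auto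
  have "{0..<n} - \<beta> = {0..<n} - \<gamma>"
    using digits_inj[OF q_ge2 s1] e unfolding ee_def by blast
  thus ?thesis using b g by blast
qed

lemma coeff_PP: "\<beta> \<subseteq> {0..<n} \<Longrightarrow> coeff (PP c) (ee \<beta>) = mm c \<beta>"
proof -
  assume b: "\<beta> \<subseteq> {0..<n}"
  have "coeff (PP c) (ee \<beta>) = (\<Sum>\<gamma>\<in>Pow {0..<n}. if \<gamma> = \<beta> then mm c \<gamma> else 0)"
    unfolding PP_def coeff_sum
  proof (rule sum.cong[OF refl])
    fix \<gamma> assume "\<gamma> \<in> Pow {0..<n}"
    thus "coeff (monom (mm c \<gamma>) (ee \<gamma>)) (ee \<beta>) = (if \<gamma> = \<beta> then mm c \<gamma> else 0)"
      using ee_inj[of \<gamma> \<beta>] b by (auto simp: coeff_monom)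
  qed
  also have "\<dots> = mm c \<beta>" using b by simp
  finally show ?thesis .
qed

lemma det_empty: "det (submatrix (A::'a mat) {} {}) = 1"
proof -
  have "submatrix A {} {} = 1\<^sub>m 0" by (rule eq_matI) (auto simp: dim_submatrix)
  thus ?thesis by simp
qed

lemma degree_PP: "degree (PP c) = ee {}" and lead_PP: "lead_coeff (PP c) = (- 1) ^ n"
proof -
  have le: "degree (PP c) \<le> ee {}"
    unfolding PP_def
  proof (rule degree_sum_le)
    fix \<beta> show "degree (monom (mm c \<beta>) (ee \<beta>)) \<le> ee {}" using ee_le degree_monom_le le_trans by blast
  qed simp
  have co: "coeff (PP c) (ee {}) = (- 1) ^ n"
    using coeff_PP[of "{}" c] by (simp add: mm_def det_empty)
  hence "coeff (PP c) (ee {}) \<noteq> 0" by simp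
  hence "ee {} \<le> degree (PP c)" by (rule le_degree)
  thus "degree (PP c) = ee {}" using le by simp
  thus "lead_coeff (PP c) = (- 1) ^ n" using co by simp
qed

lemma main_fwd:
  fixes a b :: "nat \<Rightarrow> 'a"
  assumes z: "\<And>l. det (dickson_matrix q n (a(0 := a 0 - l))) = 0 \<longleftrightarrow> det (dickson_matrix q n (b(0 := b 0 - l))) = 0"
  and \<beta>: "\<beta> \<subseteq> {0..<n}"
  shows "det (submatrix (dickson_matrix q n a) \<beta> \<beta>) = det (submatrix (dickson_matrix q n b) \<beta> \<beta>)"
proof -
  define G where "G = PP a ^ (q - 1) - PP b ^ (q - 1)"
  have q1: "q - 1 > 0" using q_ge2 by simp
  have unit: "x ^ (q - 1) = 1" if "x ^ q = x" "x \<noteq> 0" for x :: 'a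
  proof -
    obtain r where r: "q = Suc r" using q_ge2 by (cases q) auto
    have "x * x ^ r = x" using that(1) r by simp
    hence "x ^ r = 1" using that(2) by simp
    thus ?thesis using r by simp
  qed
  have roots: "poly G l = 0" for l
  proof -
    let ?x = "poly (PP a) l" and ?y = "poly (PP b) l"
    have fx: "?x ^ q = ?x" "?y ^ q = ?y" by (simp_all add: poly_PP det_frob)
    have xy: "?x = 0 \<longleftrightarrow> ?y = 0" using z by (simp add: poly_PP)
    show ?thesis
    proof (cases "?x = 0")
      case True thus ?thesis using xy q1 by (simp add: G_def poly_power)
    next
      case False thus ?thesis using xy unit fx by (simp add: G_def poly_power)
    qed
  qed
  have "G = 0"
  proof (rule ccontr)
    assume G0: "G \<noteq> 0"
    have "degree G \<le> (q - 1) * ee {}"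
    proof -
      have "degree G \<le> max (degree (PP a ^ (q - 1))) (degree (PP b ^ (q - 1)))"
        unfolding G_def by (rule degree_diff_le_max)
      moreover have "degree (PP a ^ (q - 1)) \<le> (q - 1) * ee {}" "degree (PP b ^ (q - 1)) \<le> (q - 1) * ee {}"
        using degree_power_le[of "PP a" "q - 1"] degree_power_le[of "PP b" "q - 1"]
        by (simp_all add: degree_PP mult.commute)
      ultimately show ?thesis by simp
    qed
    also have "\<dots> < q ^ n" using geom_eq[of q n] q_ge2 by (simp add: E_def')
    finally have "degree G < q ^ n" .
    moreover have "card {x. poly G x = 0} \<le> degree G" by (rule card_poly_roots_bound[OF G0])
    moreover have "{x. poly G x = 0} = UNIV" using roots by auto
    ultimately show False using card by simp
  qed
  hence pe: "PP a ^ (q - 1) = PP b ^ (q - 1)" by (simp add: G_def)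
  have cq: "(of_nat (q - 1) :: 'a) \<noteq> 0"
  proof -
    have "CHAR('a) dvd q" using qk kpos by simp
    hence "(of_nat q :: 'a) = 0" by (simp add: of_nat_eq_0_iff_char_dvd)
    moreover have "(of_nat (q - 1) :: 'a) = of_nat q - 1" using q_ge2 by (simp add: of_nat_diff)
    ultimately show ?thesis by simp
  qed
  have "PP a = PP b"
  proof (rule pow_eq_imp_eq[OF pe q1 _ _ _ cq])
    show "degree (PP a) = degree (PP b)" by (simp only: degree_PP)
    show "lead_coeff (PP a) = lead_coeff (PP b)" by (simp only: lead_PP)
    show "lead_coeff (PP a) \<noteq> 0" by (simp only: lead_PP) simp
  qed
  hence "mm a \<beta> = mm b \<beta>" using coeff_PP[OF \<beta>] by metis
  thus ?thesis by (simp add: mm_def)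
qed

end


lemma pp_scale:
  fixes d a b :: "'a::field"
  assumes "d \<noteq> 0"
  shows "proj_point (d * a, d * b) = proj_point (a, b)"
proof
  show "proj_point (d * a, d * b) \<subseteq> proj_point (a, b)"
  proof
    fix u assume "u \<in> proj_point (d * a, d * b)"
    then obtain c where c: "c \<noteq> 0" "u = (c * (d * a), c * (d * b))" by (auto simp: proj_point_def)
    hence "u = ((c * d) * a, (c * d) * b)" "c * d \<noteq> 0" using assms by (simp_all add: mult.assoc)
    thus "u \<in> proj_point (a, b)" unfolding proj_point_def by auto
  qed
  show "proj_point (a, b) \<subseteq> proj_point (d * a, d * b)"
  proof
    fix u assume "u \<in> proj_point (a, b)"
    then obtain c where c: "c \<noteq> 0" "u = (c * a, c * b)" by (auto simp: proj_point_def)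
    hence "u = ((c / d) * (d * a), (c / d) * (d * b))" "c / d \<noteq> 0" using assms by simp_all
    thus "u \<in> proj_point (d * a, d * b)" unfolding proj_point_def fst_conv snd_conv by blast
  qed
qed

lemma pp_inj: "inj (\<lambda>l::'a::field. proj_point (1, l))"
proof (rule injI)
  fix l m :: 'a assume e: "proj_point (1, l) = proj_point (1, m)"
  have "(1, l) \<in> proj_point (1, l)" unfolding proj_point_def by (intro CollectI exI[of _ 1]) simp
  hence "(1, l) \<in> proj_point (1, m)" using e by simp
  thus "l = m" unfolding proj_point_def by auto
qed

context ffq begin

lemma ls_char:
  fixes c :: "nat \<Rightarrow> 'a"
  shows "linear_set (graph_space q n c) = (\<lambda>l. proj_point (1, l)) ` {l. \<exists>x. x \<noteq> 0 \<and> qpoly q n c x = l * x}"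
proof
  show "linear_set (graph_space q n c) \<subseteq> (\<lambda>l. proj_point (1, l)) ` {l. \<exists>x. x \<noteq> 0 \<and> qpoly q n c x = l * x}"
  proof
    fix P assume "P \<in> linear_set (graph_space q n c)"
    then obtain u where u: "u \<in> graph_space q n c" "u \<noteq> (0, 0)" "P = proj_point u"
      unfolding linear_set_def by blast
    then obtain x where "u = (x, qpoly q n c x)" unfolding graph_space_def by blast
    hence x: "(x, qpoly q n c x) \<noteq> (0, 0)" "P = proj_point (x, qpoly q n c x)" using u by simp_all
    have x0: "x \<noteq> 0" using x(1) qpoly_zero[of c] by auto
    define l where "l = qpoly q n c x / x"
    have hl: "qpoly q n c x = l * x" using x0 by (simp add: l_def)
    have "P = proj_point (x * 1, x * l)" using x(2) hl by (simp add: mult.commute)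
    also have "\<dots> = proj_point (1, l)" by (rule pp_scale[OF x0])
    finally show "P \<in> (\<lambda>l. proj_point (1, l)) ` {l. \<exists>x. x \<noteq> 0 \<and> qpoly q n c x = l * x}"
      using x0 hl by blast
  qed
  show "(\<lambda>l. proj_point (1, l)) ` {l. \<exists>x. x \<noteq> 0 \<and> qpoly q n c x = l * x} \<subseteq> linear_set (graph_space q n c)"
  proof
    fix P assume "P \<in> (\<lambda>l. proj_point (1, l)) ` {l. \<exists>x. x \<noteq> 0 \<and> qpoly q n c x = l * x}"
    then obtain l x where x: "x \<noteq> 0" "qpoly q n c x = l * x" "P = proj_point (1, l)" by blast
    have "proj_point (1, l) = proj_point (x * 1, x * l)" by (rule pp_scale[OF x(1), symmetric])
    also have "\<dots> = proj_point (x, qpoly q n c x)" using x(2) by (simp add: mult.commute)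
    finally have "P = proj_point (x, qpoly q n c x)" using x(3) by simp
    moreover have "(x, qpoly q n c x) \<in> graph_space q n c - {(0,0)}" using x(1) unfolding graph_space_def by auto
    ultimately show "P \<in> linear_set (graph_space q n c)" unfolding linear_set_def by blast
  qed
qed

lemma S_char:
  fixes c :: "nat \<Rightarrow> 'a"
  shows "(\<exists>x. x \<noteq> 0 \<and> qpoly q n c x = l * x) \<longleftrightarrow> det (dickson_matrix q n (c(0 := c 0 - l))) = 0"
  unfolding det_zero_root qpoly_shift by simp

lemma ls_eq_iff:
  fixes a b :: "nat \<Rightarrow> 'a"
  shows "linear_set (graph_space q n a) = linear_set (graph_space q n b) \<longleftrightarrow>
    (\<forall>l. det (dickson_matrix q n (a(0 := a 0 - l))) = 0 \<longleftrightarrow> det (dickson_matrix q n (b(0 := b 0 - l))) = 0)"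
proof -
  have "linear_set (graph_space q n a) = linear_set (graph_space q n b) \<longleftrightarrow>
    {l. \<exists>x. x \<noteq> 0 \<and> qpoly q n a x = l * x} = {l. \<exists>x. x \<noteq> 0 \<and> qpoly q n b x = l * x}"
    unfolding ls_char by (rule inj_image_eq_iff[OF pp_inj])
  also have "\<dots> \<longleftrightarrow> (\<forall>l. det (dickson_matrix q n (a(0 := a 0 - l))) = 0 \<longleftrightarrow> det (dickson_matrix q n (b(0 := b 0 - l))) = 0)"
    unfolding S_char[symmetric] by blast
  finally show ?thesis .
qed

lemma main_loc:
  fixes a b :: "nat \<Rightarrow> 'a"
  shows "linear_set (graph_space q n a) = linear_set (graph_space q n b) \<longleftrightarrow>
    (\<forall>\<alpha>. \<alpha> \<subseteq> {..<n} \<and> \<alpha> \<noteq> {} \<longrightarrow>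
       det (submatrix (dickson_matrix q n a) \<alpha> \<alpha>) =
       det (submatrix (dickson_matrix q n b) \<alpha> \<alpha>))"
proof
  assume "linear_set (graph_space q n a) = linear_set (graph_space q n b)"
  hence z: "\<And>l. det (dickson_matrix q n (a(0 := a 0 - l))) = 0 \<longleftrightarrow> det (dickson_matrix q n (b(0 := b 0 - l))) = 0"
    using ls_eq_iff by blast
  show "\<forall>\<alpha>. \<alpha> \<subseteq> {..<n} \<and> \<alpha> \<noteq> {} \<longrightarrow>
       det (submatrix (dickson_matrix q n a) \<alpha> \<alpha>) = det (submatrix (dickson_matrix q n b) \<alpha> \<alpha>)"
  proof (intro allI impI)
    fix \<alpha> assume "\<alpha> \<subseteq> {..<n} \<and> \<alpha> \<noteq> {}"
    hence "\<alpha> \<subseteq> {0..<n}" by auto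
    thus "det (submatrix (dickson_matrix q n a) \<alpha> \<alpha>) = det (submatrix (dickson_matrix q n b) \<alpha> \<alpha>)"
      by (rule main_fwd[OF z])
  qed
next
  assume h: "\<forall>\<alpha>. \<alpha> \<subseteq> {..<n} \<and> \<alpha> \<noteq> {} \<longrightarrow>
       det (submatrix (dickson_matrix q n a) \<alpha> \<alpha>) = det (submatrix (dickson_matrix q n b) \<alpha> \<alpha>)"
  have all: "det (submatrix (dickson_matrix q n a) \<beta> \<beta>) = det (submatrix (dickson_matrix q n b) \<beta> \<beta>)"
    if "\<beta> \<in> Pow {0..<n}" for \<beta>
  proof (cases "\<beta> = {}")
    case True thus ?thesis by (simp add: det_empty)
  next
    case False
    moreover have "\<beta> \<subseteq> {..<n}" using that by auto
    ultimately show ?thesis using h by blast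
  qed
  have "det (dickson_matrix q n (a(0 := a 0 - l))) = det (dickson_matrix q n (b(0 := b 0 - l)))" for l
    unfolding P_expand by (rule sum.cong[OF refl]) (simp add: all)
  thus "linear_set (graph_space q n a) = linear_set (graph_space q n b)"
    using ls_eq_iff by simp
qed

end

lemma of_nat_card_zero: "(of_nat (card (UNIV :: 'a set)) :: 'a::{finite,ring_1}) = 0"
proof -
  have b: "bij_betw (\<lambda>x::'a. x + 1) UNIV UNIV"
    by (rule bij_betwI[of _ _ _ "\<lambda>x. x - 1"]) auto
  have "(\<Sum>x\<in>(UNIV::'a set). x) = (\<Sum>x\<in>(UNIV::'a set). x + 1)"
    using sum.reindex_bij_betw[OF b, of "\<lambda>x. x"] by simp
  also have "\<dots> = (\<Sum>x\<in>(UNIV::'a set). x) + of_nat (card (UNIV :: 'a set))"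
    by (simp add: sum.distrib)
  finally show ?thesis by simp
qed

theorem mainTheorem6:
  fixes q n :: nat and a b :: "nat \<Rightarrow> 'a::{finite,field}"
  assumes "\<exists>p k. prime p \<and> k > 0 \<and> q = p ^ k"
    and "n \<ge> 2"
    and "card (UNIV :: 'a set) = q ^ n"
  shows "linear_set (graph_space q n a) = linear_set (graph_space q n b) \<longleftrightarrow>
    (\<forall>\<alpha>. \<alpha> \<subseteq> {..<n} \<and> \<alpha> \<noteq> {} \<longrightarrow>
       det (submatrix (dickson_matrix q n a) \<alpha> \<alpha>) =
       det (submatrix (dickson_matrix q n b) \<alpha> \<alpha>))"
proof -
  obtain p k where pk: "prime p" "k > 0" "q = p ^ k" using assms(1) by blast
  have cpos: "CHAR('a) > 0" by (rule finite_imp_CHAR_pos) simp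
  have pc: "prime CHAR('a)" by (rule prime_CHAR_semidom[OF cpos])
  have "CHAR('a) dvd card (UNIV :: 'a set)" using of_nat_card_zero[where 'a='a] by (simp add: of_nat_eq_0_iff_char_dvd)
  hence "CHAR('a) dvd p ^ (k * n)" using assms(3) pk(3) by (simp add: power_mult)
  hence "CHAR('a) dvd p" using pc prime_dvd_power by blast
  hence cp: "CHAR('a) = p" using primes_dvd_imp_eq pc pk(1) by blast
  interpret ffq q n k "TYPE('a)"
    by unfold_locales (simp_all add: pc cp pk assms)
  show ?thesis by (rule main_loc)
qed


end
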